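(* Let $A\in\mathbb{R}^{n\times n}$, $B\in\mathbb{R}^{n\times m}$, $C\in\mathbb{R}^{p\times n}$, and let $\overline{K},\underline{K}\in\mathbb{R}^{m\times n}$ and $\overline{L},\underline{L}\in\mathbb{R}^{n\times p}$. Consider the linear system on $\mathbb{R}^{3n}$ \[ \begin{bmatrix} x \\ \overline{x} \\ \underline{x}\end{bmatrix}(t+1) = \begin{bmatrix} A & B\overline{K} & B\underline{K} \\ \overline{L}C & A-\overline{L}C+B\overline{K} & B\underline{K} \\ \underline{L}C & B\overline{K} & A-\underline{L}C+B\underline{K} \end{bmatrix} \begin{bmatrix} x \\ \overline{x} \\ \underline{x}\end{bmatrix}(t), \] and the set \[ \mathcal{X}=\{(x,\overline{x},\underline{x}) : x,\overline{x},\underline{x}\in\mathbb{R}^n_+,\ \underline{x}\le x\le \overline{x}\}. \] Then $\mathcal{X}$ is invariant under these dynamics (i.e., every trajectory starting in $\mathcal{X}$ remains in $\mathcal{X}$ for all $t\ge 0$) if and only if all of the following hold: \[ A+B(\overline{K}+\underline{K})\ge 0,\quad A+B\overline{K}\ge0,\quad B\overline{K}\ge0,\quad A-\overline{L}C\ge0,\quad A-\underline{L}C\ge0,\quad B\overline{K}+\underline{L}C\ge0 . \]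
   Context: All inequalities between matrices or vectors are element-wise. $\mathbb{R}^n_+$ denotes the closed nonnegative orthant. This system is the closed loop of $x(t+1)=Ax(t)+Bu(t)$, $y(t)=Cx(t)$ with two Luenberger observers $\overline{x}(t+1)=(A-\overline{L}C)\overline{x}(t)+\overline{L}y(t)+Bu(t)$, $\underline{x}(t+1)=(A-\underline{L}C)\underline{x}(t)+\underline{L}y(t)+Bu(t)$ (upper and lower estimates) and feedback $u(t)=\underline{K}\,\underline{x}(t)+\overline{K}\,\overline{x}(t)$. *)

theory Defs
  imports "HOL-Analysis.Analysis"
begin

definition nonneg_mat :: "real^'c^'r \<Rightarrow> bool" where
  "nonneg_mat M \<longleftrightarrow> (\<forall>i j. 0 \<le> M $ i $ j)"

definition nonneg_vec :: "real^'n \<Rightarrow> bool" where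
  "nonneg_vec v \<longleftrightarrow> (\<forall>i. 0 \<le> v $ i)"

definition vec_le :: "real^'n \<Rightarrow> real^'n \<Rightarrow> bool" where
  "vec_le u v \<longleftrightarrow> (\<forall>i. u $ i \<le> v $ i)"

definition closed_loop ::
  "real^'n^'n \<Rightarrow> real^'m^'n \<Rightarrow> real^'n^'p \<Rightarrow> real^'n^'m \<Rightarrow> real^'n^'m
   \<Rightarrow> real^'p^'n \<Rightarrow> real^'p^'n
   \<Rightarrow> (real^'n) \<times> (real^'n) \<times> (real^'n) \<Rightarrow> (real^'n) \<times> (real^'n) \<times> (real^'n)" where
  "closed_loop A B C Kup Klo Lup Llo = (\<lambda>(x, xu, xl).
       (A *v x + (B ** Kup) *v xu + (B ** Klo) *v xl,
        (Lup ** C) *v x + (A - Lup ** C + B ** Kup) *v xu + (B ** Klo) *v xl,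
        (Llo ** C) *v x + (B ** Kup) *v xu + (A - Llo ** C + B ** Klo) *v xl))"

definition interval_set :: "((real^'n) \<times> (real^'n) \<times> (real^'n)) set" where
  "interval_set = {(x, xu, xl). nonneg_vec x \<and> nonneg_vec xu \<and> nonneg_vec xl
                      \<and> vec_le xl x \<and> vec_le x xu}"

definition forward_invariant :: "('a \<Rightarrow> 'a) \<Rightarrow> 'a set \<Rightarrow> bool" where
  "forward_invariant f S \<longleftrightarrow> (\<forall>z0\<in>S. \<forall>t::nat. (f ^^ t) z0 \<in> S)"

end

theory Submission
  imports Defs
begin

lemmas mvsimps = matrix_vector_mult_add_rdistrib matrix_vector_mult_diff_rdistrib
  matrix_vector_mult_diff_distrib matrix_vector_right_distrib matrix_add_ldistrib

lemma cl_eq: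
  "closed_loop A B C Kup Klo Lup Llo (a+b, a+b+c, a) =
    ((A + B**Kup + B**Klo) *v a + (A + B**Kup) *v b + (B**Kup) *v c,
     (A + B**Kup + B**Klo) *v a + (A + B**Kup) *v b + (A - Lup**C + B**Kup) *v c,
     (A + B**Kup + B**Klo) *v a + (Llo**C + B**Kup) *v b + (B**Kup) *v c)"
  by (simp add: closed_loop_def mvsimps algebra_simps)

lemma nn: "nonneg_mat P \<Longrightarrow> nonneg_vec v \<Longrightarrow> nonneg_vec (P *v v)"
  unfolding nonneg_mat_def nonneg_vec_def matrix_vector_mult_def
  by (auto intro!: sum_nonneg)

lemma nn_add: "nonneg_vec u \<Longrightarrow> nonneg_vec v \<Longrightarrow> nonneg_vec (u + v)"
  unfolding nonneg_vec_def by (auto intro: add_nonneg_nonneg)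

lemma col: "(P *v axis j 1) $ i = P $ i $ j"
  by (simp add: matrix_vector_mult_def axis_def if_distrib cong: if_cong)

theorem lemma1:
  fixes A :: "real^'n^'n" and B :: "real^'m^'n" and C :: "real^'n^'p"
    and Kup Klo :: "real^'n^'m" and Lup Llo :: "real^'p^'n"
  shows "forward_invariant (closed_loop A B C Kup Klo Lup Llo) interval_set \<longleftrightarrow>
     (nonneg_mat (A + B ** (Kup + Klo)) \<and> nonneg_mat (A + B ** Kup) \<and> nonneg_mat (B ** Kup)
      \<and> nonneg_mat (A - Lup ** C) \<and> nonneg_mat (A - Llo ** C)
      \<and> nonneg_mat (B ** Kup + Llo ** C))"
  (is "?L \<longleftrightarrow> ?R")
proof
  let ?f = "closed_loop A B C Kup Klo Lup Llo"
  let ?M = "B ** Kup" and ?N = "B ** Klo"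
  assume L: ?L
  have step: "?f (a+b, a+b+c, a) \<in> interval_set" if "(a+b, a+b+c, a) \<in> interval_set" for a b c
  proof -
    have "(?f ^^ 1) (a+b, a+b+c, a) \<in> interval_set"
      using L that unfolding forward_invariant_def by blast
    thus ?thesis by simp
  qed
  have e: "(axis j 1 :: real^'n) $ i \<ge> 0" for i j by (simp add: axis_def)
  have c1: "0 \<le> (A + ?M + ?N) $ i $ j" for i j
  proof -
    have "(axis j 1 + 0, axis j 1 + 0 + 0, axis j 1) \<in> interval_set"
      using e by (simp add: interval_set_def nonneg_vec_def vec_le_def)
    from step[OF this] have "nonneg_vec ((A + ?M + ?N) *v axis j 1)"
      unfolding cl_eq by (simp add: interval_set_def)
    thus ?thesis unfolding nonneg_vec_def col by simp
  qed
  have c2: "0 \<le> (Llo**C + ?M) $ i $ j \<and> 0 \<le> (A + ?M) $ i $ j \<and> (Llo**C + ?M) $ i $ j \<le> (A + ?M) $ i $ j" for i j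
  proof -
    have "(0 + axis j 1, 0 + axis j 1 + 0, 0) \<in> interval_set"
      using e by (simp add: interval_set_def nonneg_vec_def vec_le_def)
    from step[OF this] have "nonneg_vec ((Llo**C + ?M) *v axis j 1) \<and> nonneg_vec ((A + ?M) *v axis j 1)
       \<and> vec_le ((Llo**C + ?M) *v axis j 1) ((A + ?M) *v axis j 1)"
      unfolding cl_eq by (simp add: interval_set_def)
    thus ?thesis unfolding nonneg_vec_def vec_le_def col by simp
  qed
  have c3: "0 \<le> ?M $ i $ j \<and> ?M $ i $ j \<le> (A - Lup**C + ?M) $ i $ j" for i j
  proof -
    have "(0 + 0, 0 + 0 + axis j 1, 0) \<in> interval_set"
      using e by (simp add: interval_set_def nonneg_vec_def vec_le_def)
    from step[OF this] have "nonneg_vec (?M *v axis j 1)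
       \<and> vec_le (?M *v axis j 1) ((A - Lup**C + ?M) *v axis j 1)"
      unfolding cl_eq by (simp add: interval_set_def)
    thus ?thesis unfolding nonneg_vec_def vec_le_def col by simp
  qed
  show ?R
    unfolding nonneg_mat_def matrix_add_ldistrib
  proof (intro conjI allI)
    fix i j
    show "0 \<le> (A + (?M + ?N)) $ i $ j" using c1[of i j] by simp
    show "0 \<le> (A + ?M) $ i $ j" using c2[of i j] by simp
    show "0 \<le> ?M $ i $ j" using c3[of i j] by simp
    show "0 \<le> (A - Lup ** C) $ i $ j" using c3[of i j] by simp
    show "0 \<le> (A - Llo ** C) $ i $ j" using c2[of i j] by simp
    show "0 \<le> (?M + Llo ** C) $ i $ j" using c2[of i j] by simp
  qed
next
  let ?f = "closed_loop A B C Kup Klo Lup Llo"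
  let ?M = "B ** Kup" and ?N = "B ** Klo"
  assume R: ?R
  have P: "nonneg_mat (A + ?M + ?N)" using R by (simp add: matrix_add_ldistrib add.assoc)
  have step: "?f z \<in> interval_set" if z: "z \<in> interval_set" for z
  proof -
    obtain x xu xl where zz: "z = (x, xu, xl)" by (cases z) auto
    define a where "a = xl"
    define b where "b = x - xl"
    define c where "c = xu - x"
    have ab: "nonneg_vec a" "nonneg_vec b" "nonneg_vec c"
      using z unfolding zz a_def b_def c_def interval_set_def nonneg_vec_def vec_le_def by auto
    have zeq: "z = (a+b, a+b+c, a)" unfolding zz a_def b_def c_def by simp
    let ?a' = "(A + ?M + ?N) *v a + (Llo**C + ?M) *v b + ?M *v c"
    have e1: "(A + ?M + ?N) *v a + (A + ?M) *v b + ?M *v c = ?a' + (A - Llo**C) *v b"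
      by (simp add: mvsimps algebra_simps)
    have e2: "(A + ?M + ?N) *v a + (A + ?M) *v b + (A - Lup**C + ?M) *v c
       = ((A + ?M + ?N) *v a + (A + ?M) *v b + ?M *v c) + (A - Lup**C) *v c"
      by (simp add: mvsimps algebra_simps)
    have na: "nonneg_vec ?a'" using R P ab by (intro nn_add nn) (auto simp: add.commute)
    have nb: "nonneg_vec ((A - Llo**C) *v b)" using R ab by (intro nn) auto
    have nc: "nonneg_vec ((A - Lup**C) *v c)" using R ab by (intro nn) auto
    have nx: "nonneg_vec (?a' + (A - Llo**C) *v b)" using na nb by (rule nn_add)
    have nxu: "nonneg_vec (?a' + (A - Llo**C) *v b + (A - Lup**C) *v c)" using nx nc by (rule nn_add)
    show ?thesis unfolding zeq cl_eq e2 e1 interval_set_def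
      using na nb nc nx nxu by (auto simp: vec_le_def nonneg_vec_def)
  qed
  show ?L unfolding forward_invariant_def
  proof (intro ballI allI)
    fix z0 :: "(real^'n) \<times> (real^'n) \<times> (real^'n)" and t :: nat
    assume "z0 \<in> interval_set"
    thus "(?f ^^ t) z0 \<in> interval_set" by (induction t) (auto intro: step)
  qed
qed

end
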